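(* Let $\mathcal G=(\mathcal V,\mathcal E)$ be a connected undirected graph on $\mathcal V=\{1,\dots,N\}$, and fix a node $i\in\{1,\dots,N-1\}$. Let $\widehat q_i$ be the $i$-th entry of the unweighted least-squares estimate $\widehat{\mathbf q}=\mathbf M^{-1}(\mathbf H\odot\widehat{\mathbf D})\mathbf 1$ on $\mathcal G$ (defined in the context). Consider the directed graph $\overrightarrow{\mathcal G}_i=(\mathcal V,\overrightarrow{\mathcal E}_i)$ and the probabilities $\eta_{j\to\ell,i}$ defined in the context, and let $(\check q_j)$ be the solution of the linear system $$\check q_N=0,\qquad \check q_j=\sum_{\ell\in\mathcal N^-_{ji}}(\check q_\ell+\widehat d_{j,\ell})\,\eta_{j\to\ell,i}$$ on $\overrightarrow{\mathcal G}_i$. Then $\widehat q_i=\check q_i$.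
   Context: Setting: $\widehat d_{j,\ell}$, $(j,\ell)\in\mathcal E$, are given real numbers with $\widehat d_{\ell,j}=-\widehat d_{j,\ell}$ (noisy estimates of quality differences $q_j-q_\ell$), and $\widehat{\mathbf D}=\{\widehat d_{j,\ell}\}$. Let $\rho_j$ be the degree of node $j$ in $\mathcal G$; $[\mathbf H]_{j,\ell}=1/\rho_j$ if $j<N$ and $(j,\ell)\in\mathcal E$, $0$ otherwise; $\mathbf M=\mathbf I-\mathbf H$ (invertible); $\odot$ is the Hadamard product and $\mathbf 1$ the all-ones vector. Let $\mathbf T$ be the $(N-1)\times(N-1)$ matrix obtained from $\mathbf H$ by removing its last row and column, and define for $j<N$: $\theta_{j,i}=\frac{[(\mathbf I-\mathbf T)^{-1}]_{i,j}}{\rho_j}$ (the average number of times an edge incident to $j$ is traversed from $j$ by the standard random walk on $\mathcal G$ started at $i$ and stopped at $N$), and $\theta_{N,i}=0$. The directed graph $\overrightarrow{\mathcal G}_i=(\mathcal V,\overrightarrow{\mathcal E}_i)$ has $(j,\ell)\in\overrightarrow{\mathcal E}_i$ iff $(j,\ell)\in\mathcal E$ and either ($j<N$ and $\ell=N$) or ($j<N$, $\ell<N$ and $\theta_{j,i}>\theta_{\ell,i}$). Let $\mathcal N^-_{ji}=\{\ell:(j,\ell)\in\overrightarrow{\mathcal E}_i\}$ (called the in-neighbors of $j$ in the paper). For $\ell\in\mathcal N^-_{ji}$, $\eta_{j\to\ell,i}=\frac{\theta_{j,i}-\theta_{\ell,i}}{\sum_{\ell'\in\mathcal N^-_{ji}}(\theta_{j,i}-\theta_{\ell',i})}$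 (transition probabilities of a biased random walk on $\overrightarrow{\mathcal G}_i$). *)

theory Defs
  imports "Jordan_Normal_Form.Matrix" "Jordan_Normal_Form.Gauss_Jordan_Elimination"
begin

text \<open>Nodes of the graph are 0,...,N-1 (node k here corresponds to node k+1 of the paper);
  the distinguished last node of the paper (node N) is node N-1 here.  These are also
  the row/column indices of the (0-based) matrices.  The undirected graph is given by a
  symmetric irreflexive edge set E.\<close>

definition deg :: "(nat \<times> nat) set \<Rightarrow> nat \<Rightarrow> nat" where
  "deg E j = card {l. (j, l) \<in> E}"

definition Hmat :: "nat \<Rightarrow> (nat \<times> nat) set \<Rightarrow> real mat" where
  "Hmat N E = mat N N (\<lambda>(j, l). if j < N - 1 \<and> (j, l) \<in> E then 1 / real (deg E j) else 0)"

definition Mmat :: "nat \<Rightarrow> (nat \<times> nat) set \<Rightarrow> real mat" where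
  "Mmat N E = 1\<^sub>m N - Hmat N E"

definition hadamard :: "real mat \<Rightarrow> real mat \<Rightarrow> real mat" where
  "hadamard A B = mat (dim_row A) (dim_col A) (\<lambda>(j, l). A $$ (j, l) * B $$ (j, l))"

definition Dmat :: "nat \<Rightarrow> (nat \<Rightarrow> nat \<Rightarrow> real) \<Rightarrow> real mat" where
  "Dmat N d = mat N N (\<lambda>(j, l). d j l)"

definition ones_vec :: "nat \<Rightarrow> real vec" where
  "ones_vec N = vec N (\<lambda>_. 1)"

definition minv :: "real mat \<Rightarrow> real mat" where
  "minv A = the (mat_inverse A)"

definition qhat :: "nat \<Rightarrow> (nat \<times> nat) set \<Rightarrow> (nat \<Rightarrow> nat \<Rightarrow> real) \<Rightarrow> real vec" where
  "qhat N E d = minv (Mmat N E) *\<^sub>v (hadamard (Hmat N E) (Dmat N d) *\<^sub>v ones_vec N)"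

definition Tmat :: "nat \<Rightarrow> (nat \<times> nat) set \<Rightarrow> real mat" where
  "Tmat N E = mat (N - 1) (N - 1) (\<lambda>(j, l). Hmat N E $$ (j, l))"

definition theta :: "nat \<Rightarrow> (nat \<times> nat) set \<Rightarrow> nat \<Rightarrow> nat \<Rightarrow> real" where
  "theta N E j i = (if j < N - 1
     then minv (1\<^sub>m (N - 1) - Tmat N E) $$ (i, j) / real (deg E j) else 0)"

text \<open>Out-neighbours (called in-neighbours N^-_{ji} in the paper) of j in the directed graph G_i.\<close>
definition Nminus :: "nat \<Rightarrow> (nat \<times> nat) set \<Rightarrow> nat \<Rightarrow> nat \<Rightarrow> nat set" where
  "Nminus N E j i = {l. (j, l) \<in> E \<and> j < N - 1 \<and>
     (l = N - 1 \<or> (l < N - 1 \<and> theta N E j i > theta N E l i))}"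

definition eta :: "nat \<Rightarrow> (nat \<times> nat) set \<Rightarrow> nat \<Rightarrow> nat \<Rightarrow> nat \<Rightarrow> real" where
  "eta N E j l i = (theta N E j i - theta N E l i) /
     (\<Sum>l'\<in>Nminus N E j i. (theta N E j i - theta N E l' i))"

end

theory Submission
  imports Defs "Jordan_Normal_Form.Determinant"
begin

lemma combine:
  fixes N :: nat and E :: "(nat \<times> nat) set" and d :: "nat \<Rightarrow> nat \<Rightarrow> real"
    and i :: nat and qc x \<theta> :: "nat \<Rightarrow> real"
  assumes E_sub: "E \<subseteq> {..<N} \<times> {..<N}"
    and E_sym: "\<And>j l. (j, l) \<in> E \<Longrightarrow> (l, j) \<in> E"
    and E_irrefl: "\<And>j. (j, j) \<notin> E"
    and d_antisym: "\<And>j l. (j, l) \<in> E \<Longrightarrow> d l j = - d j l"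
    and i_range: "i < N - 1"
    and x0: "x (N - 1) = 0" and th0: "\<theta> (N - 1) = 0"
    and xeq: "\<And>k. k < N - 1 \<Longrightarrow> (\<Sum>l\<in>{l. (k,l) \<in> E}. x k - x l) = (\<Sum>l\<in>{l. (k,l) \<in> E}. d k l)"
    and theq: "\<And>k. k < N - 1 \<Longrightarrow> (\<Sum>l\<in>{l. (k,l) \<in> E}. \<theta> k - \<theta> l) = (if k = i then 1 else 0)"
    and thnn: "\<And>k. k < N - 1 \<Longrightarrow> \<theta> k \<ge> 0"
    and qc0: "qc (N - 1) = 0"
    and qceq: "\<And>k. k < N - 1 \<Longrightarrow> qc k = (\<Sum>l\<in>{l. (k, l) \<in> E \<and> k < N - 1 \<and> (l = N - 1 \<or> (l < N - 1 \<and> \<theta> k > \<theta> l))}.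
        (qc l + d k l) * ((\<theta> k - \<theta> l) / (\<Sum>l'\<in>{l. (k, l) \<in> E \<and> k < N - 1 \<and> (l = N - 1 \<or> (l < N - 1 \<and> \<theta> k > \<theta> l))}. (\<theta> k - \<theta> l'))))"
  shows "x i = qc i"
proof -
  define I where "I = {..<N}"
  define P where "P k l \<longleftrightarrow> (k, l) \<in> E \<and> k < N - 1 \<and> (l = N - 1 \<or> (l < N - 1 \<and> \<theta> k > \<theta> l))" for k l
  have finI: "finite I" unfolding I_def by simp
  have iI: "i \<in> I" using i_range unfolding I_def by simp
  have Ek: "(k,l) \<in> E \<Longrightarrow> k < N \<and> l < N" for k l using E_sub by auto
  have Isplit: "I = insert (N - 1) {..<N - 1}" unfolding I_def using i_range by auto
  have conv: "(\<Sum>l\<in>{l. (k,l) \<in> E}. f l) = (\<Sum>l\<in>I. if (k,l) \<in> E then f l else 0)" for k and f :: "nat \<Rightarrow> real"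
  proof -
    have "{l. (k,l) \<in> E} = {l \<in> I. (k,l) \<in> E}" using Ek unfolding I_def by auto
    then show ?thesis by (simp add: sum.inter_filter[OF finI])
  qed
  have convP: "(\<Sum>l\<in>{l. P k l}. f l) = (\<Sum>l\<in>I. if P k l then f l else 0)" for k and f :: "nat \<Rightarrow> real"
  proof -
    have "{l. P k l} = {l \<in> I. P k l}" using Ek unfolding I_def P_def by auto
    then show ?thesis by (simp add: sum.inter_filter[OF finI])
  qed
  have sumN: "(\<Sum>k\<in>I. g k) = g (N - 1) + (\<Sum>k<N - 1. g k)" for g :: "nat \<Rightarrow> real"
    unfolding Isplit by (subst sum.insert) auto
  define W where "W = (\<Sum>k\<in>I. \<Sum>l\<in>I. if (k,l) \<in> E then \<theta> k * d k l else 0)"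
  define R where "R = (\<Sum>k\<in>I. \<Sum>l\<in>I. if P k l then (\<theta> k - \<theta> l) * d k l else 0)"
  have swapE: "(\<Sum>k\<in>I. \<Sum>l\<in>I. if (k,l) \<in> E then g k l else 0) = (\<Sum>k\<in>I. \<Sum>l\<in>I. if (k,l) \<in> E then g l k else 0)" for g :: "nat \<Rightarrow> nat \<Rightarrow> real"
  proof -
    have "(\<Sum>k\<in>I. \<Sum>l\<in>I. if (k,l) \<in> E then g k l else 0) = (\<Sum>l\<in>I. \<Sum>k\<in>I. if (k,l) \<in> E then g k l else 0)"
      by (rule sum.swap)
    also have "\<dots> = (\<Sum>l\<in>I. \<Sum>k\<in>I. if (l,k) \<in> E then g k l else 0)"
      using E_sym by (intro sum.cong refl) (metis (full_types))
    finally show ?thesis .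
  qed
  have A: "x i = W"
  proof -
    have "x i = (\<Sum>k\<in>I. if k = i then x k else 0)"
      using iI finI by simp
    also have "\<dots> = (\<Sum>k\<in>I. x k * (if k = i then 1 else 0))"
      by (intro sum.cong) auto
    also have "\<dots> = (\<Sum>k\<in>I. x k * (\<Sum>l\<in>I. if (k,l) \<in> E then \<theta> k - \<theta> l else 0))"
      proof (intro sum.cong refl)
        fix k assume "k \<in> I"
        then show "x k * (if k = i then 1 else 0) = x k * (\<Sum>l\<in>I. if (k,l) \<in> E then \<theta> k - \<theta> l else 0)"
          using theq[of k] conv[where k=k] x0 unfolding I_def
          by (cases "k < N - 1") (auto simp: not_less_iff_gr_or_eq less_diff_conv2)
      qed
    also have "\<dots> = (\<Sum>k\<in>I. \<Sum>l\<in>I. if (k,l) \<in> E then x k * \<theta> k - x k * \<theta> l else 0)"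
      unfolding sum_distrib_left by (intro sum.cong refl) (auto simp: algebra_simps)
    also have "\<dots> = (\<Sum>k\<in>I. \<Sum>l\<in>I. if (k,l) \<in> E then x k * \<theta> k else 0) - (\<Sum>k\<in>I. \<Sum>l\<in>I. if (k,l) \<in> E then x k * \<theta> l else 0)"
      unfolding sum_subtractf[symmetric] by (intro sum.cong refl) auto
    also have "(\<Sum>k\<in>I. \<Sum>l\<in>I. if (k,l) \<in> E then x k * \<theta> l else 0) = (\<Sum>k\<in>I. \<Sum>l\<in>I. if (k,l) \<in> E then x l * \<theta> k else 0)"
      by (rule swapE)
    also have "(\<Sum>k\<in>I. \<Sum>l\<in>I. if (k,l) \<in> E then x k * \<theta> k else 0) - (\<Sum>k\<in>I. \<Sum>l\<in>I. if (k,l) \<in> E then x l * \<theta> k else 0)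
       = (\<Sum>k\<in>I. \<Sum>l\<in>I. if (k,l) \<in> E then \<theta> k * (x k - x l) else 0)"
      unfolding sum_subtractf[symmetric] by (intro sum.cong refl) (auto simp: algebra_simps)
    also have "\<dots> = (\<Sum>k\<in>I. \<theta> k * (\<Sum>l\<in>I. if (k,l) \<in> E then x k - x l else 0))"
      unfolding sum_distrib_left by (intro sum.cong refl) (auto simp: algebra_simps)
    also have "\<dots> = (\<Sum>k\<in>I. \<theta> k * (\<Sum>l\<in>I. if (k,l) \<in> E then d k l else 0))"
      proof (intro sum.cong refl)
        fix k assume "k \<in> I"
        then show "\<theta> k * (\<Sum>l\<in>I. if (k,l) \<in> E then x k - x l else 0) = \<theta> k * (\<Sum>l\<in>I. if (k,l) \<in> E then d k l else 0)"
          using xeq[of k] conv[where k=k] th0 unfolding I_def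
          by (cases "k < N - 1") (auto simp: not_less_iff_gr_or_eq less_diff_conv2)
      qed
    also have "\<dots> = W" unfolding W_def unfolding sum_distrib_left by (intro sum.cong refl) (auto simp: algebra_simps)
    finally show ?thesis .
  qed
  have C: "W = R"
  proof -
    have trm: "(if (k,l) \<in> E then (\<theta> k - \<theta> l) * d k l else 0) =
        (if P k l then (\<theta> k - \<theta> l) * d k l else 0) + (if P l k then (\<theta> l - \<theta> k) * d l k else 0)" for k l
    proof (cases "(k,l) \<in> E")
      case True
      then have kl: "k < N" "l < N" "k \<noteq> l" "(l,k) \<in> E" using Ek E_irrefl E_sym by auto
      have dd: "d l k = - d k l" using d_antisym True by simp
      show ?thesis using kl True unfolding P_def dd by (auto simp: algebra_simps)
    next
      case False
      then have "(l,k) \<notin> E" using E_sym by blast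
      then show ?thesis using False unfolding P_def by auto
    qed
    have "W - (\<Sum>k\<in>I. \<Sum>l\<in>I. if (k,l) \<in> E then \<theta> l * d k l else 0) = (\<Sum>k\<in>I. \<Sum>l\<in>I. if (k,l) \<in> E then (\<theta> k - \<theta> l) * d k l else 0)"
      unfolding W_def sum_subtractf[symmetric] by (intro sum.cong refl) (auto simp: algebra_simps)
    moreover have "(\<Sum>k\<in>I. \<Sum>l\<in>I. if (k,l) \<in> E then \<theta> l * d k l else 0) = - W"
    proof -
      have "(\<Sum>k\<in>I. \<Sum>l\<in>I. if (k,l) \<in> E then \<theta> l * d k l else 0) = (\<Sum>k\<in>I. \<Sum>l\<in>I. if (k,l) \<in> E then \<theta> k * d l k else 0)"
        by (rule swapE)
      also have "\<dots> = (\<Sum>k\<in>I. \<Sum>l\<in>I. - (if (k,l) \<in> E then \<theta> k * d k l else 0))"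
        using d_antisym by (intro sum.cong refl) auto
      finally show ?thesis unfolding W_def by (simp add: sum_negf)
    qed
    moreover have "(\<Sum>k\<in>I. \<Sum>l\<in>I. if (k,l) \<in> E then (\<theta> k - \<theta> l) * d k l else 0) = R + (\<Sum>k\<in>I. \<Sum>l\<in>I. if P l k then (\<theta> l - \<theta> k) * d l k else 0)"
      unfolding trm R_def by (simp add: sum.distrib)
    moreover have "(\<Sum>k\<in>I. \<Sum>l\<in>I. if P l k then (\<theta> l - \<theta> k) * d l k else 0) = R"
      unfolding R_def by (rule sum.swap[symmetric])
    ultimately show ?thesis by linarith
  qed
  define S where "S k = (\<Sum>l\<in>I. if P k l then \<theta> k - \<theta> l else 0)" for k
  define In where "In k = (\<Sum>j\<in>I. if P j k then \<theta> j - \<theta> k else 0)" for k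
  have cons: "S k - In k = (if k = i then 1 else 0)" if "k < N - 1" for k
  proof -
    have trm: "(if (k,l) \<in> E then \<theta> k - \<theta> l else 0) =
        (if P k l then \<theta> k - \<theta> l else 0) - (if P l k then \<theta> l - \<theta> k else 0)" for l
    proof (cases "(k,l) \<in> E")
      case True
      then have kl: "k < N" "l < N" "k \<noteq> l" "(l,k) \<in> E" using Ek E_irrefl E_sym by auto
      show ?thesis using kl True that unfolding P_def by auto
    next
      case False
      then have "(l,k) \<notin> E" using E_sym by blast
      then show ?thesis using False unfolding P_def by auto
    qed
    have "S k - In k = (\<Sum>l\<in>I. if (k,l) \<in> E then \<theta> k - \<theta> l else 0)"
      unfolding S_def In_def trm by (simp add: sum_subtractf)
    also have "\<dots> = (if k = i then 1 else 0)" using theq[OF that] conv by simp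
    finally show ?thesis .
  qed
  have E1: "qc k * S k = (\<Sum>l\<in>I. if P k l then (qc l + d k l) * (\<theta> k - \<theta> l) else 0)" if "k \<in> I" for k
  proof (cases "k < N - 1")
    case False
    then have "\<not> P k l" for l unfolding P_def by auto
    then show ?thesis unfolding S_def by simp
  next
    case True
    have nn: "\<And>l. l \<in> I \<Longrightarrow> 0 \<le> (if P k l then \<theta> k - \<theta> l else 0)"
      using thnn[OF True] th0 unfolding P_def by auto
    have q: "qc k = (\<Sum>l\<in>I. if P k l then (qc l + d k l) * (\<theta> k - \<theta> l) else 0) / S k"
      using qceq[OF True] unfolding P_def[symmetric] convP S_def sum_divide_distrib
      by (simp only:) (intro sum.cong refl, auto)
    show ?thesis
    proof (cases "S k = 0")
      case False
      then show ?thesis using q by simp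
    next
      case True
      then have "\<forall>l\<in>I. (if P k l then \<theta> k - \<theta> l else 0) = 0"
        using sum_nonneg_eq_0_iff[OF finI, of "\<lambda>l. if P k l then \<theta> k - \<theta> l else 0"] nn
        unfolding S_def by blast
      then have "(\<Sum>l\<in>I. if P k l then (qc l + d k l) * (\<theta> k - \<theta> l) else 0) = 0"
        by (intro sum.neutral) (metis mult_zero_right)
      then show ?thesis using True by simp
    qed
  qed
  have B: "qc i = R"
  proof -
    have "qc i = (\<Sum>k\<in>I. if k = i then qc k else 0)"
      using iI finI by simp
    also have "\<dots> = (\<Sum>k\<in>I. qc k * (if k = i then 1 else 0))"
      by (intro sum.cong) auto
    also have "\<dots> = (\<Sum>k\<in>I. qc k * (S k - In k))"
      proof (intro sum.cong refl)
        fix k assume "k \<in> I"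
        then show "qc k * (if k = i then 1 else 0) = qc k * (S k - In k)"
          using cons[of k] qc0 unfolding I_def
          by (cases "k < N - 1") (auto simp: not_less_iff_gr_or_eq less_diff_conv2)
      qed
    also have "\<dots> = (\<Sum>k\<in>I. qc k * S k) - (\<Sum>k\<in>I. qc k * In k)"
      unfolding sum_subtractf[symmetric] by (intro sum.cong refl) (auto simp: algebra_simps)
    also have "(\<Sum>k\<in>I. qc k * S k) = (\<Sum>k\<in>I. \<Sum>l\<in>I. if P k l then (qc l + d k l) * (\<theta> k - \<theta> l) else 0)"
      using E1 by (intro sum.cong refl)
    also have "(\<Sum>k\<in>I. qc k * In k) = (\<Sum>k\<in>I. \<Sum>j\<in>I. if P j k then qc k * (\<theta> j - \<theta> k) else 0)"
      unfolding In_def unfolding sum_distrib_left by (intro sum.cong refl) (auto simp: algebra_simps)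
    also have "\<dots> = (\<Sum>j\<in>I. \<Sum>k\<in>I. if P j k then qc k * (\<theta> j - \<theta> k) else 0)"
      by (rule sum.swap)
    also have "(\<Sum>k\<in>I. \<Sum>l\<in>I. if P k l then (qc l + d k l) * (\<theta> k - \<theta> l) else 0) - \<dots> = R"
      unfolding R_def sum_subtractf[symmetric] by (intro sum.cong refl) (auto simp: algebra_simps)
    finally show ?thesis .
  qed
  show ?thesis using A B C by simp
qed


lemma minv_props:
  fixes A :: "real mat"
  assumes A: "A \<in> carrier_mat n n"
    and inj: "\<And>v. v \<in> carrier_vec n \<Longrightarrow> A *\<^sub>v v = 0\<^sub>v n \<Longrightarrow> v = 0\<^sub>v n"
  shows "A * minv A = 1\<^sub>m n \<and> minv A * A = 1\<^sub>m n \<and> minv A \<in> carrier_mat n n"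
proof -
  have "det A \<noteq> 0" using det_0_iff_vec_prod_zero[OF A] inj by blast
  then have "mat_inverse A \<noteq> None" using mat_inverse(1)[OF A] det_non_zero_imp_unit[OF A] by metis
  then obtain B where B: "mat_inverse A = Some B" by auto
  then have "minv A = B" unfolding minv_def by simp
  then show ?thesis using mat_inverse(2)[OF A B] by simp
qed

lemma minp:
  fixes N :: nat and E :: "(nat \<times> nat) set" and y :: "nat \<Rightarrow> real"
  assumes E_sub: "E \<subseteq> {..<N} \<times> {..<N}"
    and connected: "\<And>u v. u < N \<Longrightarrow> v < N \<Longrightarrow> (u, v) \<in> E\<^sup>*"
    and N2: "N \<ge> 2"
    and y0: "y (N - 1) = 0"
    and ge: "\<And>k. k < N - 1 \<Longrightarrow> (\<Sum>l\<in>{l. (k,l) \<in> E}. y k - y l) \<ge> 0"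
    and k: "k < N - 1"
  shows "y k \<ge> 0"
proof (rule ccontr)
  assume neg: "\<not> y k \<ge> 0"
  define m where "m = Min (y ` {..<N})"
  have fin: "finite (y ` {..<N})" by simp
  have ne: "y ` {..<N} \<noteq> {}" using N2 by (metis empty_iff image_is_empty lessThan_iff less_le_trans pos2)
  have mle: "\<And>v. v < N \<Longrightarrow> m \<le> y v" unfolding m_def using fin by auto
  obtain k0 where k0: "k0 < N" "y k0 = m" using Min_in[OF fin ne] unfolding m_def by auto
  have "k < N" using k by simp
  then have mneg: "m < 0" using mle[of k] neg by auto
  have finnb: "finite {l. (v,l) \<in> E}" for v
    by (rule finite_subset[of _ "{..<N}"]) (use E_sub in auto)
  have "y v = m" if "(k0, v) \<in> E\<^sup>*" for v
    using that
  proof (induction rule: rtrancl_induct)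
    case base
    then show ?case using k0 by simp
  next
    case (step v w)
    have vN: "v < N" "w < N" using step.hyps(2) E_sub by auto
    have "v \<noteq> N - 1" using step.IH y0 mneg by auto
    then have v1: "v < N - 1" using vN by auto
    have s: "(\<Sum>l\<in>{l. (v,l) \<in> E}. y l - m) \<le> 0"
      using ge[OF v1] step.IH by (simp add: sum_negf[symmetric] sum_subtractf)
    have nn: "\<And>l. l \<in> {l. (v,l) \<in> E} \<Longrightarrow> 0 \<le> y l - m" using mle E_sub by auto
    have "\<forall>l\<in>{l. (v,l) \<in> E}. y l - m = 0"
      using sum_nonneg_eq_0_iff[OF finnb[of v], of "\<lambda>l. y l - m"] nn s
        sum_nonneg[of "{l. (v,l) \<in> E}" "\<lambda>l. y l - m"] by (metis antisym)
    then show ?case using step.hyps(2) by auto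
  qed
  then have "y (N - 1) = m" using connected[OF k0(1), of "N - 1"] N2 by auto
  then show False using y0 mneg by simp
qed


theorem proposition4:
  fixes N :: nat and E :: "(nat \<times> nat) set" and d :: "nat \<Rightarrow> nat \<Rightarrow> real"
    and i :: nat and qc :: "nat \<Rightarrow> real"
  assumes E_sub: "E \<subseteq> {..<N} \<times> {..<N}"
    and E_sym: "\<And>j l. (j, l) \<in> E \<Longrightarrow> (l, j) \<in> E"
    and E_irrefl: "\<And>j. (j, j) \<notin> E"
    and connected: "\<And>u v. u < N \<Longrightarrow> v < N \<Longrightarrow> (u, v) \<in> E\<^sup>*"
    and d_antisym: "\<And>j l. (j, l) \<in> E \<Longrightarrow> d l j = - d j l"
    and i_range: "i < N - 1"
    and qc_last: "qc (N - 1) = 0"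
    and qc_eq: "\<And>j. j < N - 1 \<Longrightarrow>
        qc j = (\<Sum>l\<in>Nminus N E j i. (qc l + d j l) * eta N E j l i)"
  shows "qhat N E d $ i = qc i"
proof -
  have N2: "N \<ge> 2" using i_range by simp
  have finnb: "finite {l. (k,l) \<in> E}" for k
    by (rule finite_subset[of _ "{..<N}"]) (use E_sub in auto)
  have Ek: "(k,l) \<in> E \<Longrightarrow> k < N \<and> l < N" for k l using E_sub by auto
  have degpos: "real (deg E k) > 0" if "k < N" for k
  proof -
    obtain v where v: "v < N" "v \<noteq> k"
    proof (cases "k = N - 1")
      case True
      then show ?thesis using that[of 0] N2 by auto
    next
      case False
      then show ?thesis using that[of "N - 1"] N2 by auto
    qed
    have "(k, v) \<in> E\<^sup>*" using connected[OF \<open>k < N\<close> v(1)] .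
    then obtain w where "(k, w) \<in> E" using v(2)
      by (metis converse_rtranclE)
    then have "{l. (k,l) \<in> E} \<noteq> {}" by auto
    then show ?thesis unfolding deg_def using finnb[of k] by (simp add: card_gt_0_iff)
  qed
  have full: "(\<Sum>l\<in>{l. (k,l) \<in> E}. f l) = (\<Sum>l<N. if (k,l) \<in> E then f l else 0)" for k and f :: "nat \<Rightarrow> real"
  proof -
    have "{l. (k,l) \<in> E} = {l \<in> {..<N}. (k,l) \<in> E}" using Ek by auto
    then show ?thesis using sum.inter_filter[of "{..<N}" f "\<lambda>l. (k,l) \<in> E"] by simp
  qed
  have Nsplit: "{..<N} = insert (N - 1) {..<N - 1}" using N2 by auto
  have cut: "(\<Sum>l\<in>{l. (k,l) \<in> E}. f l) = (\<Sum>l<N - 1. if (k,l) \<in> E then f l else 0)"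
    if "f (N - 1) = 0" for k and f :: "nat \<Rightarrow> real"
    unfolding full Nsplit using that by (subst sum.insert) auto
  have sumc: "(\<Sum>l\<in>{l. (k,l) \<in> E}. f k - f l) = real (deg E k) * f k - (\<Sum>l\<in>{l. (k,l) \<in> E}. f l)"
    for k and f :: "nat \<Rightarrow> real"
    by (simp add: sum_subtractf deg_def)
  have Hent: "Hmat N E $$ (j,l) = (if j < N - 1 \<and> (j,l) \<in> E then 1 / real (deg E j) else 0)"
    if "j < N" "l < N" for j l
    using that by (simp add: Hmat_def)
  have Hcar: "Hmat N E \<in> carrier_mat N N" unfolding Hmat_def by (rule mat_carrier)
  have Mcar: "Mmat N E \<in> carrier_mat N N" unfolding Mmat_def by (rule minus_carrier_mat[OF Hcar])
  have Ment: "Mmat N E $$ (k,l) = (if k = l then 1 else 0) - (if k < N - 1 \<and> (k,l) \<in> E then 1 / real (deg E k) else 0)"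
    if "k < N" "l < N" for k l
    unfolding Mmat_def using that Hcar Hent[OF that] by simp
  have Mv: "(Mmat N E *\<^sub>v x) $ k = x $ k - (if k < N - 1 then (\<Sum>l\<in>{l. (k,l) \<in> E}. x $ l) / real (deg E k) else 0)"
    if x: "x \<in> carrier_vec N" and k: "k < N" for x k
  proof -
    have "(Mmat N E *\<^sub>v x) $ k = (\<Sum>l<N. Mmat N E $$ (k,l) * x $ l)"
      using Mcar x k by (simp add: scalar_prod_def atLeast0LessThan)
    also have "\<dots> = (\<Sum>l<N. (if k = l then x $ l else 0) - (if k < N - 1 \<and> (k,l) \<in> E then x $ l / real (deg E k) else 0))"
      using k by (intro sum.cong refl) (auto simp: Ment algebra_simps)
    also have "\<dots> = x $ k - (\<Sum>l<N. if k < N - 1 \<and> (k,l) \<in> E then x $ l / real (deg E k) else 0)"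
      using k by (simp add: sum_subtractf)
    also have "(\<Sum>l<N. if k < N - 1 \<and> (k,l) \<in> E then x $ l / real (deg E k) else 0)
       = (if k < N - 1 then (\<Sum>l\<in>{l. (k,l) \<in> E}. x $ l) / real (deg E k) else 0)"
      unfolding full sum_divide_distrib by (auto intro: sum.cong)
    finally show ?thesis .
  qed
  have Minj: "x = 0\<^sub>v N" if x: "x \<in> carrier_vec N" and z: "Mmat N E *\<^sub>v x = 0\<^sub>v N" for x
  proof -
    define y where "y l = x $ l" for l
    have y0: "y (N - 1) = 0" using Mv[OF x, of "N - 1"] z N2 unfolding y_def by simp
    have yeq: "(\<Sum>l\<in>{l. (k,l) \<in> E}. y k - y l) = 0" if k: "k < N - 1" for k
    proof -
      have "x $ k - (\<Sum>l\<in>{l. (k,l) \<in> E}. x $ l) / real (deg E k) = 0"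
        using Mv[OF x, of k] z k by simp
      then have "real (deg E k) * x $ k = (\<Sum>l\<in>{l. (k,l) \<in> E}. x $ l)"
        using degpos[of k] k by (simp add: field_simps)
      then show ?thesis unfolding sumc y_def by simp
    qed
    have p: "y k \<ge> 0" if "k < N - 1" for k
      using minp[OF E_sub connected N2, of y k] y0 yeq that by simp
    have q: "- y k \<ge> 0" if "k < N - 1" for k
      using minp[OF E_sub connected N2, of "\<lambda>l. - y l" k] y0 yeq that by (simp add: sum_negf[symmetric] sum_subtractf)
    show ?thesis
    proof (rule eq_vecI)
      fix k assume "k < dim_vec (0\<^sub>v N :: real vec)"
      then have "k < N" by simp
      then show "x $ k = 0\<^sub>v N $ k" using p[of k] q[of k] y0 unfolding y_def
        by (cases "k < N - 1") (auto simp: not_less_iff_gr_or_eq less_diff_conv2)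
    qed (use x in simp)
  qed
  have Mprops: "Mmat N E * minv (Mmat N E) = 1\<^sub>m N \<and> minv (Mmat N E) * Mmat N E = 1\<^sub>m N \<and> minv (Mmat N E) \<in> carrier_mat N N"
    by (rule minv_props[OF Mcar Minj])
  define A where "A = 1\<^sub>m (N - 1) - Tmat N E"
  have Acar: "A \<in> carrier_mat (N - 1) (N - 1)" unfolding A_def Tmat_def
    by (rule minus_carrier_mat[OF mat_carrier])
  have Aent: "A $$ (j,l) = (if j = l then 1 else 0) - (if (j,l) \<in> E then 1 / real (deg E j) else 0)"
    if "j < N - 1" "l < N - 1" for j l
  proof -
    have "Tmat N E $$ (j,l) = (if (j,l) \<in> E then 1 / real (deg E j) else 0)"
      using that Hent[of j l] by (simp add: Tmat_def)
    then show ?thesis unfolding A_def using that by (simp add: Tmat_def)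
  qed
  have Av: "(A *\<^sub>v x) $ k = x $ k - (\<Sum>l<N - 1. if (k,l) \<in> E then x $ l else 0) / real (deg E k)"
    if x: "x \<in> carrier_vec (N - 1)" and k: "k < N - 1" for x k
  proof -
    have "(A *\<^sub>v x) $ k = (\<Sum>l<N - 1. A $$ (k,l) * x $ l)"
      using Acar x k by (simp add: scalar_prod_def atLeast0LessThan)
    also have "\<dots> = (\<Sum>l<N - 1. (if k = l then x $ l else 0) - (if (k,l) \<in> E then x $ l / real (deg E k) else 0))"
      using k by (intro sum.cong refl) (auto simp: Aent algebra_simps)
    also have "\<dots> = x $ k - (\<Sum>l<N - 1. if (k,l) \<in> E then x $ l / real (deg E k) else 0)"
      using k by (simp add: sum_subtractf)
    also have "(\<Sum>l<N - 1. if (k,l) \<in> E then x $ l / real (deg E k) else 0)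
       = (\<Sum>l<N - 1. if (k,l) \<in> E then x $ l else 0) / real (deg E k)"
      unfolding sum_divide_distrib by (auto intro: sum.cong)
    finally show ?thesis .
  qed
  have Ainj: "x = 0\<^sub>v (N - 1)" if x: "x \<in> carrier_vec (N - 1)" and z: "A *\<^sub>v x = 0\<^sub>v (N - 1)" for x
  proof -
    define y where "y l = (if l < N - 1 then x $ l else 0)" for l
    have y0: "y (N - 1) = 0" unfolding y_def by simp
    have yeq: "(\<Sum>l\<in>{l. (k,l) \<in> E}. y k - y l) = 0" if k: "k < N - 1" for k
    proof -
      have "x $ k - (\<Sum>l<N - 1. if (k,l) \<in> E then x $ l else 0) / real (deg E k) = 0"
        using Av[OF x k] z k by simp
      moreover have "(\<Sum>l<N - 1. if (k,l) \<in> E then x $ l else 0) = (\<Sum>l\<in>{l. (k,l) \<in> E}. y l)"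
      proof -
        have "(\<Sum>l\<in>{l. (k,l) \<in> E}. y l) = (\<Sum>l<N - 1. if (k,l) \<in> E then y l else 0)"
          by (rule cut[where f=y and k=k, OF y0])
        also have "\<dots> = (\<Sum>l<N - 1. if (k,l) \<in> E then x $ l else 0)"
          by (intro sum.cong refl) (simp add: y_def)
        finally show ?thesis by simp
      qed
      ultimately have "real (deg E k) * y k = (\<Sum>l\<in>{l. (k,l) \<in> E}. y l)"
        using degpos[of k] k unfolding y_def by (simp add: field_simps)
      then show ?thesis unfolding sumc by simp
    qed
    have p: "y k \<ge> 0" if "k < N - 1" for k
      using minp[OF E_sub connected N2, of y k] y0 yeq that by simp
    have q: "- y k \<ge> 0" if "k < N - 1" for k
      using minp[OF E_sub connected N2, of "\<lambda>l. - y l" k] y0 yeq that by (simp add: sum_negf[symmetric] sum_subtractf)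
    show ?thesis
    proof (rule eq_vecI)
      fix k assume "k < dim_vec (0\<^sub>v (N - 1) :: real vec)"
      then have "k < N - 1" by simp
      then show "x $ k = 0\<^sub>v (N - 1) $ k" using p[of k] q[of k] unfolding y_def by simp
    qed (use x in simp)
  qed
  have Aprops: "A * minv A = 1\<^sub>m (N - 1) \<and> minv A * A = 1\<^sub>m (N - 1) \<and> minv A \<in> carrier_mat (N - 1) (N - 1)"
    by (rule minv_props[OF Acar Ainj])
  define G where "G = minv A"
  define \<theta> where "\<theta> k = theta N E k i" for k
  have thG: "\<theta> k = (if k < N - 1 then G $$ (i,k) / real (deg E k) else 0)" for k
    unfolding \<theta>_def theta_def G_def A_def ..
  have th0: "\<theta> (N - 1) = 0" unfolding thG by simp
  have theq: "(\<Sum>l\<in>{l. (k,l) \<in> E}. \<theta> k - \<theta> l) = (if k = i then 1 else 0)" if k: "k < N - 1" for k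
  proof -
    have Gcar: "G \<in> carrier_mat (N - 1) (N - 1)" using Aprops G_def by simp
    have "(G * A) $$ (i,k) = (if i = k then 1 else 0)" using Aprops i_range k unfolding G_def by simp
    moreover have "(G * A) $$ (i,k) = (\<Sum>j<N - 1. G $$ (i,j) * A $$ (j,k))"
      using Gcar Acar i_range k by (simp add: scalar_prod_def atLeast0LessThan)
    moreover have "(\<Sum>j<N - 1. G $$ (i,j) * A $$ (j,k)) = (\<Sum>j<N - 1. (if j = k then G $$ (i,j) else 0) - (if (k,j) \<in> E then \<theta> j else 0))"
    proof (intro sum.cong refl)
      fix j assume "j \<in> {..<N - 1}"
      then have j: "j < N - 1" by simp
      have "(j,k) \<in> E \<longleftrightarrow> (k,j) \<in> E" using E_sym by blast
      then show "G $$ (i,j) * A $$ (j,k) = (if j = k then G $$ (i,j) else 0) - (if (k,j) \<in> E then \<theta> j else 0)"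
        using j k by (auto simp: Aent thG algebra_simps)
    qed
    moreover have "(\<Sum>j<N - 1. (if j = k then G $$ (i,j) else 0) - (if (k,j) \<in> E then \<theta> j else 0))
        = G $$ (i,k) - (\<Sum>l\<in>{l. (k,l) \<in> E}. \<theta> l)"
      using k by (simp add: sum_subtractf cut[where f=\<theta> and k=k, OF th0])
    moreover have "G $$ (i,k) = real (deg E k) * \<theta> k" using thG[of k] k degpos[of k] by simp
    ultimately show ?thesis unfolding sumc by (cases "k = i") auto
  qed
  have thnn: "\<theta> k \<ge> 0" if "k < N - 1" for k
    using minp[OF E_sub connected N2, of \<theta> k] th0 theq that by simp
  define c where "c = hadamard (Hmat N E) (Dmat N d) *\<^sub>v ones_vec N"
  define B where "B = minv (Mmat N E)"
  have Bcar: "B \<in> carrier_mat N N" using Mprops B_def by simp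
  have ccar: "c \<in> carrier_vec N" unfolding c_def hadamard_def Hmat_def carrier_vec_def by simp
  have cent: "c $ k = (if k < N - 1 then (\<Sum>l\<in>{l. (k,l) \<in> E}. d k l) / real (deg E k) else 0)"
    if k: "k < N" for k
  proof -
    have "c $ k = (\<Sum>l<N. Hmat N E $$ (k,l) * d k l)"
      using k unfolding c_def hadamard_def ones_vec_def
      by (simp add: Hmat_def scalar_prod_def atLeast0LessThan Dmat_def)
    also have "\<dots> = (\<Sum>l<N. if k < N - 1 \<and> (k,l) \<in> E then d k l / real (deg E k) else 0)"
      using k by (intro sum.cong refl) (auto simp: Hent)
    also have "\<dots> = (if k < N - 1 then (\<Sum>l\<in>{l. (k,l) \<in> E}. d k l) / real (deg E k) else 0)"
      unfolding full sum_divide_distrib by (auto intro: sum.cong)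
    finally show ?thesis .
  qed
  define x where "x = qhat N E d"
  have xB: "x = B *\<^sub>v c" unfolding x_def qhat_def B_def c_def ..
  have xcar: "x \<in> carrier_vec N" unfolding xB using Bcar ccar by simp
  have Mx: "Mmat N E *\<^sub>v x = c"
  proof -
    have "Mmat N E *\<^sub>v x = (Mmat N E * B) *\<^sub>v c" unfolding xB
      using Mcar Bcar ccar by (simp add: assoc_mult_mat_vec)
    also have "\<dots> = c" using Mprops ccar unfolding B_def by simp
    finally show ?thesis .
  qed
  have x0: "x $ (N - 1) = 0" using Mv[OF xcar, of "N - 1"] cent[of "N - 1"] Mx N2 by simp
  have xeq: "(\<Sum>l\<in>{l. (k,l) \<in> E}. x $ k - x $ l) = (\<Sum>l\<in>{l. (k,l) \<in> E}. d k l)" if k: "k < N - 1" for k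
  proof -
    have "x $ k - (\<Sum>l\<in>{l. (k,l) \<in> E}. x $ l) / real (deg E k) = (\<Sum>l\<in>{l. (k,l) \<in> E}. d k l) / real (deg E k)"
      using Mv[OF xcar, of k] cent[of k] Mx k by simp
    then have "real (deg E k) * x $ k - (\<Sum>l\<in>{l. (k,l) \<in> E}. x $ l) = (\<Sum>l\<in>{l. (k,l) \<in> E}. d k l)"
      using degpos[of k] k by (simp add: field_simps)
    then show ?thesis using sumc[where k=k and f="\<lambda>l. x $ l"] by simp
  qed
  have qceq: "qc k = (\<Sum>l\<in>{l. (k, l) \<in> E \<and> k < N - 1 \<and> (l = N - 1 \<or> (l < N - 1 \<and> \<theta> k > \<theta> l))}.
        (qc l + d k l) * ((\<theta> k - \<theta> l) / (\<Sum>l'\<in>{l. (k, l) \<in> E \<and> k < N - 1 \<and> (l = N - 1 \<or> (l < N - 1 \<and> \<theta> k > \<theta> l))}. (\<theta> k - \<theta> l'))))"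
    if "k < N - 1" for k
    using qc_eq[OF that] unfolding Nminus_def eta_def \<theta>_def .
  have "x $ i = qc i"
    by (rule combine[where x="\<lambda>k. x $ k" and \<theta>=\<theta>, OF E_sub E_sym E_irrefl d_antisym i_range x0 th0 xeq theq thnn qc_last qceq])
  then show ?thesis unfolding x_def .
qed

end
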